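(* For every $\rho<0$, the harmonic map $\psi_\rho:\mathbb{CP}^n\to\mathbb{CP}^n$ is equivariantly weakly stable with respect to the $\mathrm{SU}(p+1)\times\mathrm{SU}(n-p)$-action, i.e. every $\lambda$ in its equivariant spectrum satisfies $\lambda\ge0$.
   Context: Let $n\ge1$ and $0\le p<n$ be integers. $\mathbb{CP}^n$ carries the Fubini–Study metric (the metric making $\mathbb S^{2n+1}\to\mathbb{CP}^n$ a Riemannian submersion). $G=\mathrm{SU}(p+1)\times\mathrm{SU}(n-p)$ acts isometrically by $(A,B)\cdot[Z]=[\operatorname{diag}(A,B)Z]$; with $\gamma(t)=[\cos t\,e_1+\sin t\,e_{p+2}]$ every point of $\mathbb{CP}^n$ is $g\cdot\gamma(t)$ for some $g\in G$, $t\in[0,\pi/2]$. For $\rho\ne0$ let $r_\rho(t)=\arctan(\rho\tan t)$ on $[0,\pi/2)$, $r_\rho(\pi/2)=\operatorname{sign}(\rho)\pi/2$, and $\psi_\rho(g\cdot\gamma(t))=g\cdot\gamma(r_\rho(t))$, a harmonic map. The equivariant spectrum of $\psi_\rho$ is the set of $\lambda\in\mathbb R$ for which the Sturm–Liouville problem \[ \ddot\xi+\big[(2n-2p-1)\cot t-(2p+1)\tan t\big]\dot\xi-\Big[2(n-p-1)\frac{\cos 2r_\rho(t)}{\sin^2t}-2p\frac{\cos2r_\rho(t)}{\cos^2t}+4\frac{\cos4r_\rho(t)}{\sin^22t}\Big]\xi+\lambda\xi=0 \] has a nonzero solution $\xi\in C^\infty_0([0,\tfrac\pi2])$ (smooth,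 vanishing at $0$ and $\pi/2$). $\psi_\rho$ is equivariantly weakly stable if all these $\lambda$ are $\ge0$. *)

theory Defs
  imports "HOL-Analysis.Analysis"
begin

definition r_fun :: "real \<Rightarrow> real \<Rightarrow> real" where
  "r_fun \<rho> t = (if t = pi / 2 then sgn \<rho> * (pi / 2) else arctan (\<rho> * tan t))"

definition smooth_on_closed :: "real \<Rightarrow> real \<Rightarrow> (real \<Rightarrow> real) \<Rightarrow> (nat \<Rightarrow> real \<Rightarrow> real) \<Rightarrow> bool" where
  "smooth_on_closed a b f D \<longleftrightarrow>
     (\<forall>t\<in>{a..b}. D 0 t = f t) \<and>
     (\<forall>k. \<forall>t\<in>{a..b}. (D k has_real_derivative D (Suc k) t) (at t within {a..b}))"

definition SL_potential :: "nat \<Rightarrow> nat \<Rightarrow> real \<Rightarrow> real \<Rightarrow> real" where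
  "SL_potential n p \<rho> t =
     2 * (real n - real p - 1) * cos (2 * r_fun \<rho> t) / (sin t)\<^sup>2
     - 2 * real p * cos (2 * r_fun \<rho> t) / (cos t)\<^sup>2
     + 4 * cos (4 * r_fun \<rho> t) / (sin (2 * t))\<^sup>2"

definition SL_drift :: "nat \<Rightarrow> nat \<Rightarrow> real \<Rightarrow> real" where
  "SL_drift n p t = (2 * real n - 2 * real p - 1) * cot t - (2 * real p + 1) * tan t"

text \<open>The equation is
  required on the open interval (0,pi/2), where its coefficients are defined.\<close>
definition equivariant_spectrum :: "nat \<Rightarrow> nat \<Rightarrow> real \<Rightarrow> real set" where
  "equivariant_spectrum n p \<rho> =
     {lam. \<exists>\<xi> D. smooth_on_closed 0 (pi / 2) \<xi> D \<and>
          \<xi> 0 = 0 \<and> \<xi> (pi / 2) = 0 \<and> (\<exists>t\<in>{0..pi/2}. \<xi> t \<noteq> 0) \<and>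
          (\<forall>t\<in>{0<..<pi/2}.
             D 2 t + SL_drift n p t * D 1 t - SL_potential n p \<rho> t * \<xi> t + lam * \<xi> t = 0)}"

definition equivariantly_weakly_stable :: "nat \<Rightarrow> nat \<Rightarrow> real \<Rightarrow> bool" where
  "equivariantly_weakly_stable n p \<rho> \<longleftrightarrow> (\<forall>lam\<in>equivariant_spectrum n p \<rho>. lam \<ge> 0)"

end

theory Submission
  imports Defs
begin


definition qq :: "real \<Rightarrow> real \<Rightarrow> real" where "qq r t = cos t ^ 2 + r^2 * sin t ^ 2"
definition ell :: "real \<Rightarrow> real \<Rightarrow> real" where "ell r t = ln (sin t) + ln (cos t) - ln (qq r t)"
definition ell1 :: "real \<Rightarrow> real \<Rightarrow> real" where
  "ell1 r t = cos t / sin t - sin t / cos t + 2*(1-r^2) * sin t * cos t / qq r t"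
definition ell2 :: "real \<Rightarrow> real \<Rightarrow> real" where
  "ell2 r t = -1/sin t^2 - 1/cos t^2 + 2*(1-r^2)*((cos t^2 - sin t^2)/qq r t + 2*(1-r^2)* sin t^2*cos t^2/(qq r t)^2)"

lemma sc_pos: assumes "0 < t" "t < pi/2" shows "sin t > 0" "cos t > 0"
  using assms by (auto intro: sin_gt_zero2 cos_gt_zero)

lemma qq_pos: assumes "0 < t" "t < pi/2" shows "qq r t > 0"
  using sc_pos[OF assms] unfolding qq_def by (simp add: add_pos_nonneg)

lemma qq_deriv: "(qq r has_real_derivative (-2 * (1 - r^2) * sin t * cos t)) (at t)"
  unfolding qq_def[abs_def]
  by (rule derivative_eq_intros refl)+ (simp add: algebra_simps)

lemma ell_deriv: assumes "0 < t" "t < pi/2" shows "(ell r has_real_derivative ell1 r t) (at t)"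
proof -
  note p = sc_pos[OF assms] qq_pos[OF assms, of r]
  have l: "((\<lambda>x. ln (qq r x)) has_real_derivative (1 / qq r t) * (-2 * (1 - r^2) * sin t * cos t)) (at t)"
    using DERIV_chain2[OF DERIV_ln_divide[OF p(3)] qq_deriv[of r t]] by simp
  have a: "((\<lambda>x. ln (sin x)) has_real_derivative (1 / sin t) * cos t) (at t)"
    using DERIV_chain2[OF DERIV_ln_divide[OF p(1)] DERIV_sin[of t]] by simp
  have b: "((\<lambda>x. ln (cos x)) has_real_derivative (1 / cos t) * (- sin t)) (at t)"
    using DERIV_chain2[OF DERIV_ln_divide[OF p(2)] DERIV_cos[of t]] by simp
  have d: "(ell r has_real_derivative ((1 / sin t) * cos t + (1 / cos t) * (- sin t) - (1 / qq r t) * (-2 * (1 - r^2) * sin t * cos t))) (at t)"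
    using DERIV_diff[OF DERIV_add[OF a b] l] unfolding ell_def[abs_def] by simp
  show ?thesis
    apply (rule DERIV_cong[OF d])
    using p unfolding ell1_def by (simp add: field_simps power2_eq_square)
qed

lemma ell1_deriv: assumes "0 < t" "t < pi/2" shows "(ell1 r has_real_derivative ell2 r t) (at t)"
proof -
  note p = sc_pos[OF assms] qq_pos[OF assms, of r]
  have a: "((\<lambda>x. cos x / sin x) has_real_derivative ((- sin t) * sin t - cos t * cos t) / (sin t ^ Suc (Suc 0))) (at t)"
    using DERIV_quotient[OF DERIV_cos DERIV_sin, of t] p by simp
  have b: "((\<lambda>x. sin x / cos x) has_real_derivative (cos t * cos t - (- sin t) * sin t) / (cos t ^ Suc (Suc 0))) (at t)"
    using DERIV_quotient[OF DERIV_sin DERIV_cos, of t] p by simp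
  have n: "((\<lambda>x. 2 * (1 - r^2) * sin x * cos x) has_real_derivative 2 * (1 - r^2) * (cos t * cos t - sin t * sin t)) (at t)"
    by (rule derivative_eq_intros refl)+ (simp add: algebra_simps)
  have c: "((\<lambda>x. 2 * (1 - r^2) * sin x * cos x / qq r x) has_real_derivative
      (2 * (1 - r^2) * (cos t * cos t - sin t * sin t) * qq r t - (-2 * (1 - r^2) * sin t * cos t) * (2 * (1 - r^2) * sin t * cos t)) / (qq r t ^ Suc (Suc 0))) (at t)"
    using DERIV_quotient[OF n qq_deriv] p by simp
  have d: "(ell1 r has_real_derivative
     ((- sin t) * sin t - cos t * cos t) / (sin t ^ Suc (Suc 0)) - (cos t * cos t - (- sin t) * sin t) / (cos t ^ Suc (Suc 0))
      + (2 * (1 - r^2) * (cos t * cos t - sin t * sin t) * qq r t - (-2 * (1 - r^2) * sin t * cos t) * (2 * (1 - r^2) * sin t * cos t)) / (qq r t ^ Suc (Suc 0))) (at t)"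
    using DERIV_add[OF DERIV_diff[OF a b] c] unfolding ell1_def[abs_def] by simp
  show ?thesis
    apply (rule DERIV_cong[OF d])
    using p unfolding ell2_def apply (simp add: field_simps power2_eq_square)
    using sin_cos_squared_add[of t] by algebra
qed

lemma cos2arctan: "cos (2 * arctan x) = (1 - x^2) / (1 + x^2)"
proof -
  have "1 + x^2 > 0" by (simp add: add_pos_nonneg)
  then show ?thesis unfolding cos_double cos_arctan sin_arctan
    by (simp add: power_divide field_simps)
qed



definition XX :: "real \<Rightarrow> real \<Rightarrow> real" where
  "XX r t = (cos t ^ 2 - r^2 * sin t ^ 2) / qq r t"

definition Vs :: "real \<Rightarrow> real \<Rightarrow> real \<Rightarrow> real \<Rightarrow> real" where
  "Vs a b r t = 2 * (a - b - 1) * XX r t / (sin t)^2 - 2 * b * XX r t / (cos t)^2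
     + 4 * (2 * (XX r t)^2 - 1) / (2 * sin t * cos t)^2"

lemma V_eq: assumes "0 < t" "t < pi/2"
  shows "SL_potential n p r t = Vs (real n) (real p) r t"
proof -
  note p = sc_pos[OF assms] qq_pos[OF assms, of r]
  have rf: "r_fun r t = arctan (r * tan t)" unfolding r_fun_def using assms by auto
  have c2: "cos (2 * r_fun r t) = (cos t ^ 2 - r^2 * sin t ^ 2) / qq r t"
  proof -
    have e1: "1 - (r * tan t)^2 = (cos t ^ 2 - r^2 * sin t ^ 2) / cos t ^ 2"
      using p unfolding tan_def by (simp add: field_simps power2_eq_square)
    have e2: "1 + (r * tan t)^2 = qq r t / cos t ^ 2"
      using p unfolding tan_def qq_def by (simp add: field_simps power2_eq_square)
    show ?thesis unfolding rf cos2arctan e1 e2 using p by simp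
  qed
  have c4: "cos (4 * r_fun r t) = 2 * (cos (2 * r_fun r t))^2 - 1"
    using cos_double_cos[of "2 * r_fun r t"] by simp
  have s2: "sin (2 * t) = 2 * sin t * cos t" by (simp add: sin_double)
  show ?thesis unfolding SL_potential_def Vs_def c4 c2 s2 XX_def by simp
qed

lemma drift_eq: assumes "0 < t" "t < pi/2"
  shows "SL_drift n p t = (2 * real n - 2 * real p - 1) * (cos t / sin t) - (2 * real p + 1) * (sin t / cos t)"
  unfolding SL_drift_def cot_def tan_def by simp

lemma V_lower:
  assumes "0 < t" "t < pi/2" "r \<noteq> 0" "a - b - 1 \<ge> 0" "b \<ge> 0"
  shows "Vs a b r t \<ge> - (2 * (a - b - 1) * (1 + r^2) + 2 * b * (1 + 1/r^2) + 4 * r^2 * (1 + 1/r^2)^2)"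
proof -
  define s where "s = sin t"
  define c where "c = cos t"
  define Q where "Q = qq r t"
  have s: "s > 0" and c: "c > 0" and Q: "Q > 0" using sc_pos[OF assms(1,2)] qq_pos[OF assms(1,2)] by (auto simp: s_def c_def Q_def)
  have sc: "s^2 + c^2 = 1" by (simp add: s_def c_def)
  have Qd: "Q = c^2 + r^2 * s^2" by (simp add: Q_def qq_def s_def c_def)
  have r2: "r^2 > 0" using assms(3) by simp
  have key: "(1 + r^2) * Q - r^2 = c^2 + r^2 * r^2 * s^2" using sc Qd by algebra
  have key0: "c^2 + r^2 * r^2 * s^2 \<ge> 0" by simp
  have F1: "r^2 / Q \<le> 1 + r^2"
  proof -
    have "r^2 \<le> (1 + r^2) * Q" using key key0 by linarith
    then show ?thesis using Q by (simp add: divide_le_eq mult.commute)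
  qed
  have F2: "1 / Q \<le> 1 + 1/r^2"
  proof -
    have "r^2 \<le> (1 + r^2) * Q" using key key0 by linarith
    then have "1 \<le> (1 + 1/r^2) * Q" using r2 by (simp add: field_simps)
    then show ?thesis using Q by (simp add: divide_le_eq mult.commute)
  qed
  have P1: "(c^2 - r^2 * s^2) / (Q * s^2) \<ge> - (1 + r^2)"
  proof -
    have "(c^2 - r^2 * s^2) / (Q * s^2) + r^2 / Q = c^2 / (Q * s^2)"
      using s Q by (simp add: field_simps)
    moreover have "c^2 / (Q * s^2) \<ge> 0" using Q by simp
    ultimately show ?thesis using F1 by linarith
  qed
  have P2: "(c^2 - r^2 * s^2) / (Q * c^2) \<le> 1 + 1/r^2"
  proof -
    have "1 / Q - (c^2 - r^2 * s^2) / (Q * c^2) = r^2 * s^2 / (Q * c^2)"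
      using c Q by (simp add: field_simps)
    moreover have "r^2 * s^2 / (Q * c^2) \<ge> 0" using Q by simp
    ultimately show ?thesis using F2 by linarith
  qed
  have P3: "(2 * ((c^2 - r^2 * s^2) / Q)^2 - 1) / (s^2 * c^2) \<ge> - (4 * r^2 * (1 + 1/r^2)^2)"
  proof -
    have "(2 * ((c^2 - r^2 * s^2) / Q)^2 - 1) / (s^2 * c^2) = (c^2 - r^2 * s^2)^2 / (Q^2 * s^2 * c^2) - 4 * r^2 * (1/Q)^2"
      using s c Q apply (simp add: field_simps power2_eq_square)
      using Qd by algebra
    moreover have "(c^2 - r^2 * s^2)^2 / (Q^2 * s^2 * c^2) \<ge> 0" by simp
    moreover have "(1/Q)^2 \<le> (1 + 1/r^2)^2" using F2 Q by (intro power_mono) auto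
    ultimately show ?thesis using r2
      by (smt (verit) mult_left_mono)
  qed
  have X: "XX r t = (c^2 - r^2 * s^2) / Q" unfolding XX_def s_def c_def Q_def by simp
  have "Vs a b r t = 2 * (a - b - 1) * ((c^2 - r^2 * s^2) / (Q * s^2)) - 2 * b * ((c^2 - r^2 * s^2) / (Q * c^2))
     + (2 * ((c^2 - r^2 * s^2) / Q)^2 - 1) / (s^2 * c^2)"
    unfolding Vs_def X using s c Q unfolding s_def[symmetric] c_def[symmetric]
    by (simp add: power_mult_distrib field_simps)
  moreover have "2 * (a - b - 1) * ((c^2 - r^2 * s^2) / (Q * s^2)) \<ge> 2 * (a - b - 1) * (- (1 + r^2))"
    using P1 assms(4) by (intro mult_left_mono) auto
  moreover have "2 * b * ((c^2 - r^2 * s^2) / (Q * c^2)) \<le> 2 * b * (1 + 1/r^2)"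
    using P2 assms(5) by (intro mult_left_mono) auto
  ultimately show ?thesis using P3 by linarith
qed



lemma ident_alg:
  fixes s c r a b Q :: real
  assumes s: "s \<noteq> 0" and c: "c \<noteq> 0" and sc: "s^2 + c^2 = 1" and Q: "Q = c^2 + r^2 * s^2" and Qn: "Q \<noteq> 0"
  shows "(-1/s^2 - 1/c^2 + 2 * (1-r^2) * ((c^2-s^2)/Q + 2 * (1-r^2) * s^2 * c^2/Q^2))
        + (c/s - s/c + 2 * (1-r^2) * s * c/Q)^2
        + ((2 * a-2 * b-1) * (c/s) - (2 * b+1) * (s/c)) * (c/s - s/c + 2 * (1-r^2) * s * c/Q)
       = 2 * (a - b - 1) * ((c^2 - r^2 * s^2) / Q) / s^2 - 2 * b * ((c^2 - r^2 * s^2) / Q) / c^2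
         + 4 * (2 * ((c^2 - r^2 * s^2) / Q)^2 - 1) / (2 * s * c)^2"
  using s c Qn
  apply (simp add: field_simps)
  using sc Q by algebra

lemma ident: assumes "0 < t" "t < pi/2"
  shows "ell2 r t + (ell1 r t)^2 + ((2 * a - 2 * b - 1) * (cos t / sin t) - (2 * b + 1) * (sin t / cos t)) * ell1 r t
         = Vs a b r t"
proof -
  note p = sc_pos[OF assms] qq_pos[OF assms, of r]
  show ?thesis unfolding ell2_def ell1_def Vs_def XX_def
    by (rule ident_alg) (use p in \<open>auto simp: qq_def\<close>)
qed

definition phi :: "real \<Rightarrow> real \<Rightarrow> real \<Rightarrow> real" where "phi \<beta> r t = exp (\<beta> * ell r t)"

lemma phi_deriv: assumes "0 < t" "t < pi/2"
  shows "(phi \<beta> r has_real_derivative \<beta> * ell1 r t * phi \<beta> r t) (at t)"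
  using DERIV_chain2[OF DERIV_exp DERIV_cmult[OF ell_deriv[OF assms], of \<beta>]]
  unfolding phi_def[abs_def] by (simp add: mult.commute mult.left_commute)

lemma phi1_deriv: assumes "0 < t" "t < pi/2"
  shows "((\<lambda>t. \<beta> * ell1 r t * phi \<beta> r t) has_real_derivative (\<beta> * ell2 r t + \<beta>^2 * (ell1 r t)^2) * phi \<beta> r t) (at t)"
proof -
  have "((\<lambda>t. \<beta> * ell1 r t * phi \<beta> r t) has_real_derivative
      (\<beta> * ell2 r t) * phi \<beta> r t + (\<beta> * ell1 r t) * (\<beta> * ell1 r t * phi \<beta> r t)) (at t)"
    using DERIV_mult[OF DERIV_cmult[OF ell1_deriv[OF assms]] phi_deriv[OF assms, of \<beta> r], of \<beta>] by (simp add: algebra_simps)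
  then show ?thesis by (simp add: algebra_simps power2_eq_square)
qed

lemma phi_pos: "phi \<beta> r t > 0" unfolding phi_def by simp

lemma key_ineq:
  assumes t: "0 < t" "t < pi/2" and r: "r \<noteq> 0" and np: "p < n"
    and b: "0 < \<beta>" "\<beta> < 1"
    and K: "(1 - \<beta>) * (2 * (real n - real p - 1) * (1 + r^2) + 2 * real p * (1 + 1/r^2) + 4 * r^2 * (1 + 1/r^2)^2) + lam < 0"
  shows "(\<beta> * ell2 r t + \<beta>^2 * (ell1 r t)^2) * phi \<beta> r t + SL_drift n p t * (\<beta> * ell1 r t * phi \<beta> r t)
         - SL_potential n p r t * phi \<beta> r t + lam * phi \<beta> r t < 0"
proof -
  define K where "K = 2 * (real n - real p - 1) * (1 + r^2) + 2 * real p * (1 + 1/r^2) + 4 * r^2 * (1 + 1/r^2)^2"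
  define V where "V = Vs (real n) (real p) r t"
  define d where "d = (2 * real n - 2 * real p - 1) * (cos t / sin t) - (2 * real p + 1) * (sin t / cos t)"
  have VK: "V \<ge> - K" unfolding V_def K_def by (rule V_lower) (use t r np in auto)
  have id: "ell2 r t + (ell1 r t)^2 + d * ell1 r t = V"
    unfolding d_def V_def by (rule ident[OF t])
  have "\<beta> * ell2 r t + \<beta>^2 * (ell1 r t)^2 + d * (\<beta> * ell1 r t) - V + lam
      = (\<beta> - 1) * V + (\<beta>^2 - \<beta>) * (ell1 r t)^2 + lam"
    using id by (simp add: algebra_simps power2_eq_square) (metis (no_types, lifting) add.commute diff_add_cancel distrib_left mult.commute)
  also have "\<dots> \<le> (1 - \<beta>) * K + lam"
  proof -
    have "(\<beta>^2 - \<beta>) * (ell1 r t)^2 \<le> 0"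
      using b by (intro mult_nonpos_nonneg) (auto simp: power2_eq_square)
    moreover have "(\<beta> - 1) * V \<le> (1 - \<beta>) * K"
    proof -
      have "(1 - \<beta>) * (- V) \<le> (1 - \<beta>) * K" using VK b by (intro mult_left_mono) auto
      then show ?thesis by (simp add: algebra_simps)
    qed
    ultimately show ?thesis by linarith
  qed
  also have "\<dots> < 0" using K unfolding K_def .
  finally have neg: "\<beta> * ell2 r t + \<beta>^2 * (ell1 r t)^2 + d * (\<beta> * ell1 r t) - V + lam < 0" .
  have "(\<beta> * ell2 r t + \<beta>^2 * (ell1 r t)^2) * phi \<beta> r t + SL_drift n p t * (\<beta> * ell1 r t * phi \<beta> r t)
         - SL_potential n p r t * phi \<beta> r t + lam * phi \<beta> r t
       = (\<beta> * ell2 r t + \<beta>^2 * (ell1 r t)^2 + d * (\<beta> * ell1 r t) - V + lam) * phi \<beta> r t"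
    unfolding drift_eq[OF t] V_eq[OF t] d_def V_def by (simp add: algebra_simps)
  also have "\<dots> < 0" using neg phi_pos[of \<beta> r t] by (simp add: mult_neg_pos)
  finally show ?thesis .
qed



lemma second_deriv_min:
  fixes f f' :: "real \<Rightarrow> real"
  assumes ab: "a < t0" "t0 < b"
    and mn: "\<forall>y\<in>{a<..<b}. f t0 \<le> f y"
    and d1: "\<forall>y\<in>{a<..<b}. (f has_real_derivative f' y) (at y)"
    and d2: "(f' has_real_derivative f2) (at t0)"
    and z: "f' t0 = 0"
  shows "f2 \<ge> 0"
proof (rule ccontr)
  assume "\<not> f2 \<ge> 0"
  then have "f2 < 0" by simp
  from DERIV_neg_dec_right[OF d2 this] obtain d where d: "d > 0" "\<forall>h>0. h < d \<longrightarrow> f' t0 > f' (t0 + h)" by blast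
  define h where "h = min (d/2) ((b - t0)/2)"
  have hb: "h \<le> (b - t0)/2" "h \<le> d/2" unfolding h_def by (rule min.cobounded2, rule min.cobounded1)
  have h: "h > 0" "h < d" "t0 + h < b" using d ab hb unfolding h_def by auto
  have "\<exists>z. t0 < z \<and> z < t0 + h \<and> f (t0 + h) - f t0 = (t0 + h - t0) * f' z"
    by (rule MVT2) (use h ab d1 in auto)
  then obtain z where z1: "t0 < z" "z < t0 + h" and z2: "f (t0 + h) - f t0 = h * f' z" by auto
  have "f' z < 0" using d(2)[rule_format, of "z - t0"] z1 h z by auto
  then have "h * f' z < 0" using h by (simp add: mult_pos_neg)
  then have "f (t0 + h) < f t0" using z2 by linarith
  moreover have "f t0 \<le> f (t0 + h)" using mn h ab by auto
  ultimately show False by simp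
qed

lemma growth:
  fixes C A \<kappa> \<beta> :: real
  assumes "C \<ge> 0" "A > 0" "\<kappa> > 0" "0 < \<beta>" "\<beta> < 1"
  shows "\<exists>\<delta>>0. \<forall>y. 0 < y \<and> y < \<delta> \<longrightarrow> C * y < A * (\<kappa> * y) powr \<beta>"
proof -
  define B where "B = A * \<kappa> powr \<beta> / (C + 1)"
  have B: "B > 0" unfolding B_def using assms by auto
  define \<delta> where "\<delta> = B powr (1 / (1 - \<beta>))"
  have \<delta>: "\<delta> > 0" unfolding \<delta>_def using B by simp
  have "\<forall>y. 0 < y \<and> y < \<delta> \<longrightarrow> C * y < A * (\<kappa> * y) powr \<beta>"
  proof (intro allI impI)
    fix y :: real assume y: "0 < y \<and> y < \<delta>"
    have "y powr (1 - \<beta>) < \<delta> powr (1 - \<beta>)"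
      using y assms by (intro powr_less_mono2) auto
    also have "\<delta> powr (1 - \<beta>) = B" unfolding \<delta>_def powr_powr using assms B by simp
    finally have yb: "y powr (1 - \<beta>) < B" .
    have yy: "y = y powr (1 - \<beta>) * y powr \<beta>"
      using y by (simp add: powr_add[symmetric])
    have yp: "y powr \<beta> > 0" using y by simp
    have "C * y \<le> (C + 1) * y" using y by simp
    also have "\<dots> = (C + 1) * y powr (1 - \<beta>) * y powr \<beta>" using yy by (metis mult.assoc)
    also have "\<dots> < (C + 1) * B * y powr \<beta>"
      using yb yp assms by (intro mult_strict_right_mono) auto
    also have "(C + 1) * B = A * \<kappa> powr \<beta>" unfolding B_def using assms by simp
    also have "A * \<kappa> powr \<beta> * y powr \<beta> = A * (\<kappa> * y) powr \<beta>"
      using assms y by (simp add: powr_mult)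
    finally show "C * y < A * (\<kappa> * y) powr \<beta>" .
  qed
  then show ?thesis using \<delta> by blast
qed

lemma sin_lb: assumes "0 \<le> t" "t \<le> pi/3" shows "sin t \<ge> t / 2"
proof (cases "t = 0")
  case True then show ?thesis by simp
next
  case False
  then have t: "0 < t" using assms by simp
  have "\<exists>z. 0 < z \<and> z < t \<and> sin t - sin 0 = (t - 0) * cos z"
    by (rule MVT2) (use t in \<open>auto intro: DERIV_sin\<close>)
  then obtain z where z: "0 < z" "z < t" "sin t = t * cos z" by auto
  have "cos (pi/3) \<le> cos z" using z assms by (intro cos_monotone_0_pi_le) auto
  then have "cos z \<ge> 1/2" by (simp add: cos_60)
  then have "t * (1/2) \<le> t * cos z" using t by (intro mult_left_mono) auto
  then show ?thesis using z by simp
qed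

lemma cos_lb: assumes "0 \<le> t" "t \<le> pi/3" shows "cos t \<ge> 1/2"
proof -
  have "cos (pi/3) \<le> cos t" using assms by (intro cos_monotone_0_pi_le) auto
  then show ?thesis by (simp add: cos_60)
qed

lemma phi_powr: assumes "0 < t" "t < pi/2"
  shows "phi \<beta> r t = (sin t * cos t / qq r t) powr \<beta>"
proof -
  note p = sc_pos[OF assms] qq_pos[OF assms, of r]
  have "ell r t = ln (sin t * cos t / qq r t)" unfolding ell_def using p by (simp add: ln_mult ln_div)
  then show ?thesis unfolding phi_def powr_def using p by (simp add: mult.commute)
qed

lemma qq_le: "qq r t \<le> 1 + r^2"
proof -
  have "cos t ^ 2 \<le> 1" "sin t ^ 2 \<le> 1"
    using sin_cos_squared_add[of t] zero_le_power2[of "sin t"] zero_le_power2[of "cos t"] by linarith+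
  moreover then have "r^2 * sin t ^ 2 \<le> r^2 * 1" by (intro mult_left_mono) auto
  ultimately show ?thesis unfolding qq_def by simp
qed

lemma phi_lb_gen:
  assumes "0 < t" "t < pi/2" "0 \<le> \<beta>" "y \<ge> 0" "sin t * cos t \<ge> y / 4"
  shows "phi \<beta> r t \<ge> (y / (4 * (1 + r^2))) powr \<beta>"
proof -
  note p = sc_pos[OF assms(1,2)] qq_pos[OF assms(1,2), of r]
  have r: "1 + r^2 > 0" by (simp add: add_pos_nonneg)
  have "y / (4 * (1 + r^2)) \<le> sin t * cos t / qq r t"
  proof -
    have "y / (4 * (1 + r^2)) = (y / 4) / (1 + r^2)" by simp
    also have "\<dots> \<le> (sin t * cos t) / (1 + r^2)" by (rule divide_right_mono) (use assms r in auto)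
    also have "\<dots> \<le> (sin t * cos t) / qq r t"
      using p qq_le[of r t] by (intro divide_left_mono) auto
    finally show ?thesis .
  qed
  then show ?thesis unfolding phi_powr[OF assms(1,2)]
    using assms r by (intro powr_mono2) auto
qed

lemma phi_lb_left: assumes "0 < t" "t \<le> pi/3" "0 \<le> \<beta>"
  shows "phi \<beta> r t \<ge> (1 / (4 * (1 + r^2)) * t) powr \<beta>"
proof -
  have t2: "t < pi/2" using assms pi_gt_zero by linarith
  have "sin t * cos t \<ge> (t/2) * (1/2)"
    using sin_lb[of t] cos_lb[of t] assms by (intro mult_mono) auto
  then show ?thesis using phi_lb_gen[OF assms(1) t2 assms(3), of t r] assms by simp
qed

lemma phi_lb_right: assumes "pi/2 - t > 0" "pi/2 - t \<le> pi/3" "0 \<le> \<beta>"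
  shows "phi \<beta> r t \<ge> (1 / (4 * (1 + r^2)) * (pi/2 - t)) powr \<beta>"
proof -
  have t: "0 < t" "t < pi/2" using assms pi_gt_zero by linarith+
  have "cos t = sin (pi/2 - t)" by (simp add: sin_cos_eq)
  moreover have "sin t = cos (pi/2 - t)" by (simp add: cos_sin_eq)
  ultimately have "sin t * cos t \<ge> (1/2) * ((pi/2 - t)/2)"
    using sin_lb[of "pi/2 - t"] cos_lb[of "pi/2 - t"] assms by (intro mult_mono) auto
  then show ?thesis using phi_lb_gen[OF t assms(3), of "pi/2 - t" r] assms by simp
qed

lemma mvt_bound:
  fixes f f' :: "real \<Rightarrow> real"
  assumes der: "\<forall>x\<in>{0..T}. (f has_real_derivative f' x) (at x within {0..T})"
    and bnd: "\<forall>x\<in>{0..T}. \<bar>f' x\<bar> \<le> C" and ab: "0 \<le> a" "a \<le> b" "b \<le> T"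
  shows "\<bar>f b - f a\<bar> \<le> C * (b - a)"
proof (cases "a = b")
  case True then show ?thesis by simp
next
  case False
  then have lt: "a < b" using ab by simp
  have cT: "continuous_on {0..T} f" by (rule DERIV_continuous_on) (use der in auto)
  have cont: "continuous_on {a..b} f" by (rule continuous_on_subset[OF cT]) (use ab in auto)
  have dat: "(f has_real_derivative f' x) (at x)" if "0 < x" "x < T" for x
    using der[rule_format, of x] that at_within_Icc_at[OF that] by simp
  have "\<exists>l z. a < z \<and> z < b \<and> DERIV f z :> l \<and> f b - f a = (b - a) * l"
  proof (rule MVT[OF lt cont])
    fix x assume "a < x" "x < b"
    then have "(f has_real_derivative f' x) (at x)" using ab by (intro dat) auto
    then show "f differentiable (at x)" using real_differentiable_def by blast
  qed
  then obtain l z where z: "a < z" "z < b" "DERIV f z :> l" "f b - f a = (b - a) * l" by blast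
  have "DERIV f z :> f' z" using z ab by (intro dat) auto
  then have "l = f' z" using z(3) DERIV_unique by blast
  then have "\<bar>f b - f a\<bar> = (b - a) * \<bar>f' z\<bar>" using z lt by (simp add: abs_mult)
  also have "\<dots> \<le> (b - a) * C" using bnd z ab lt by (intro mult_left_mono) auto
  finally show ?thesis by (simp add: mult.commute)
qed



lemma core:
  fixes D :: "nat \<Rightarrow> real \<Rightarrow> real"
  assumes lam: "lam < 0" and r: "r \<noteq> 0" and np: "p < n"
    and der: "\<forall>k. \<forall>t\<in>{0..pi/2}. (D k has_real_derivative D (Suc k) t) (at t within {0..pi/2})"
    and x0: "D 0 0 = 0" and xe: "D 0 (pi/2) = 0"
    and t1: "0 < t1" "t1 < pi/2" "D 0 t1 > 0"
    and ode: "\<forall>t\<in>{0<..<pi/2}. D 2 t + SL_drift n p t * D 1 t - SL_potential n p r t * D 0 t + lam * D 0 t = 0"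
  shows False
proof -
  define K where "K = 2 * (real n - real p - 1) * (1 + r^2) + 2 * real p * (1 + 1/r^2) + 4 * r^2 * (1 + 1/r^2)^2"
  have npr: "real n - real p - 1 \<ge> 0" using np by linarith
  have K0: "K \<ge> 0" unfolding K_def using npr by (intro add_nonneg_nonneg mult_nonneg_nonneg) auto
  define e where "e = - lam / (2 * (K + 1 - lam))"
  have den: "K + 1 - lam > 0" using K0 lam by linarith
  have e0: "e > 0" unfolding e_def using lam den by (intro divide_pos_pos) auto
  have e1: "e < 1/2" unfolding e_def using lam den K0 by (simp add: field_simps)
  have eK: "e * K + lam < 0"
  proof -
    have "lam * K \<le> 0" using lam K0 by (simp add: mult_nonpos_nonneg)
    moreover have "lam * lam > 0" using lam by (simp add: mult_neg_neg)
    moreover have "e * K + lam = (lam * K + 2 * lam - 2 * (lam * lam)) / (2 * (K + 1 - lam))"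
      unfolding e_def using den by (simp add: field_simps)
    ultimately show ?thesis using den lam by (simp add: divide_neg_pos)
  qed
  define \<beta> where "\<beta> = 1 - e"
  have b: "0 < \<beta>" "\<beta> < 1" using e0 e1 unfolding \<beta>_def by auto
  have bK: "(1 - \<beta>) * K + lam < 0" using eK unfolding \<beta>_def by simp
  define \<phi> where "\<phi> = phi \<beta> r"
  have \<phi>pos: "\<And>t. \<phi> t > 0" unfolding \<phi>_def by (rule phi_pos)
  have derat: "(D k has_real_derivative D (Suc k) t) (at t)" if "0 < t" "t < pi/2" for k t
    using der[rule_format, of t k] that at_within_Icc_at[OF that] by simp
  have c1: "continuous_on {0..pi/2} (D 1)"
    by (rule DERIV_continuous_on[where D="D (Suc 1)"]) (use der in blast)
  have "continuous_on {0..pi/2} (\<lambda>t. \<bar>D 1 t\<bar>)" using c1 by (intro continuous_intros)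
  then obtain tm where "tm \<in> {0..pi/2}" and tmax: "\<forall>y\<in>{0..pi/2}. \<bar>D 1 y\<bar> \<le> \<bar>D 1 tm\<bar>"
    using continuous_attains_sup[of "{0..pi/2}" "\<lambda>t. \<bar>D 1 t\<bar>"] by auto
  define C where "C = \<bar>D 1 tm\<bar>"
  have C: "\<forall>y\<in>{0..pi/2}. \<bar>D 1 y\<bar> \<le> C" "C \<ge> 0" using tmax unfolding C_def by auto
  have der0: "\<forall>x\<in>{0..pi/2}. (D 0 has_real_derivative D 1 x) (at x within {0..pi/2})"
    using der by simp
  have bl: "\<bar>D 0 t\<bar> \<le> C * t" if "0 \<le> t" "t \<le> pi/2" for t
    using mvt_bound[OF der0 C(1), of 0 t] that x0 by simp
  have br: "\<bar>D 0 t\<bar> \<le> C * (pi/2 - t)" if "0 \<le> t" "t \<le> pi/2" for t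
    using mvt_bound[OF der0 C(1), of t "pi/2"] that xe by simp
  define \<kappa> where "\<kappa> = 1 / (4 * (1 + r^2))"
  have \<kappa>: "\<kappa> > 0" unfolding \<kappa>_def by (simp add: add_pos_nonneg)
  define A where "A = D 0 t1 / \<phi> t1"
  have A: "A > 0" unfolding A_def using t1 \<phi>pos by simp
  obtain \<delta> where \<delta>: "\<delta> > 0" "\<forall>y. 0 < y \<and> y < \<delta> \<longrightarrow> C * y < A * (\<kappa> * y) powr \<beta>"
    using growth[OF C(2) A \<kappa> b] by blast
  define d where "d = min (\<delta>/2) (min (pi/3) (min (t1/2) ((pi/2 - t1)/2)))"
  have dle: "d \<le> \<delta>/2" "d \<le> pi/3" "d \<le> t1/2" "d \<le> (pi/2 - t1)/2"
    unfolding d_def by (simp_all only: min_le_iff_disj order_refl disj_ac simp_thms)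
  have d0: "d > 0" unfolding d_def using \<delta> t1 by auto
  have small: "D 0 t / \<phi> t < A" if "0 < t" "t < pi/2" "t \<le> d \<or> pi/2 - d \<le> t" for t
  proof -
    have "D 0 t < A * \<phi> t"
    proof (cases "t \<le> d")
      case True
      have "D 0 t \<le> C * t" using bl[of t] that by auto
      also have "\<dots> < A * (\<kappa> * t) powr \<beta>" using \<delta>(2) True dle that \<delta>(1) by auto
      also have "\<dots> \<le> A * \<phi> t" unfolding \<phi>_def \<kappa>_def
        using phi_lb_left[of t \<beta> r] True dle that b A by (intro mult_left_mono) auto
      finally show ?thesis .
    next
      case False
      then have R: "pi/2 - d \<le> t" using that by auto
      have "D 0 t \<le> C * (pi/2 - t)" using br[of t] that by auto
      also have "\<dots> < A * (\<kappa> * (pi/2 - t)) powr \<beta>" using \<delta>(2) R dle that \<delta>(1) by auto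
      also have "\<dots> \<le> A * \<phi> t" unfolding \<phi>_def \<kappa>_def
        using phi_lb_right[of t \<beta> r] R dle that b A by (intro mult_left_mono) auto
      finally show ?thesis .
    qed
    then show ?thesis using \<phi>pos[of t] by (simp add: divide_less_eq)
  qed
  define S where "S = {d..pi/2 - d}"
  have t1S: "t1 \<in> S" unfolding S_def using dle t1 by auto
  have Sint: "0 < t \<and> t < pi/2" if "t \<in> S" for t using that d0 dle t1 unfolding S_def by auto
  have cS0: "continuous_on S (D 0)"
    by (rule continuous_on_subset[OF DERIV_continuous_on[of "{0..pi/2}" "D 0" "D 1"]])
       (use der Sint d0 in \<open>auto simp: S_def\<close>)
  have cSphi: "continuous_on S \<phi>"
    by (rule DERIV_continuous_on[where D="\<lambda>t. \<beta> * ell1 r t * \<phi> t"])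
       (use Sint phi_deriv in \<open>auto simp: \<phi>_def intro: has_field_derivative_at_within\<close>)
  have "continuous_on S (\<lambda>t. D 0 t / \<phi> t)"
    using cS0 cSphi \<phi>pos by (intro continuous_intros) (auto simp: less_imp_neq[symmetric])
  then obtain t0 where t0S: "t0 \<in> S" and t0max: "\<forall>y\<in>S. D 0 y / \<phi> y \<le> D 0 t0 / \<phi> t0"
    using continuous_attains_sup[of S "\<lambda>t. D 0 t / \<phi> t"] t1S unfolding S_def by auto
  define M where "M = D 0 t0 / \<phi> t0"
  have MA: "M \<ge> A" unfolding M_def A_def using t0max t1S by auto
  have M0: "M > 0" using MA A by simp
  have t0i: "0 < t0" "t0 < pi/2" using Sint[OF t0S] by auto
  have le: "D 0 t \<le> M * \<phi> t" if "0 < t" "t < pi/2" for t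
  proof -
    have "D 0 t / \<phi> t \<le> M"
    proof (cases "t \<in> S")
      case True then show ?thesis using t0max unfolding M_def by auto
    next
      case False
      then have "t \<le> d \<or> pi/2 - d \<le> t" unfolding S_def by auto
      then show ?thesis using small[OF that] MA by auto
    qed
    then show ?thesis using \<phi>pos[of t] by (simp add: divide_le_eq)
  qed
  have eq0: "D 0 t0 = M * \<phi> t0" unfolding M_def using \<phi>pos[of t0] by simp
  define h where "h = (\<lambda>t. M * \<phi> t - D 0 t)"
  define h' where "h' = (\<lambda>t. M * (\<beta> * ell1 r t * \<phi> t) - D 1 t)"
  define h2 where "h2 = M * ((\<beta> * ell2 r t0 + \<beta>^2 * (ell1 r t0)^2) * \<phi> t0) - D 2 t0"
  have hd: "(h has_real_derivative h' y) (at y)" if "0 < y" "y < pi/2" for y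
    unfolding h_def h'_def \<phi>_def
    using DERIV_diff[OF DERIV_cmult[OF phi_deriv[OF that, of \<beta> r]] derat[OF that, of 0], of M] by simp
  have hd2: "(h' has_real_derivative h2) (at t0)"
    unfolding h'_def h2_def \<phi>_def
    using DERIV_diff[OF DERIV_cmult[OF phi1_deriv[OF t0i, of \<beta> r]] derat[OF t0i, of 1], of M]
    by (simp add: numeral_2_eq_2)
  have hmin: "\<forall>y\<in>{0<..<pi/2}. h t0 \<le> h y"
    using le eq0 unfolding h_def by auto
  have h'0: "h' t0 = 0"
  proof (rule DERIV_local_min[OF hd[OF t0i]])
    show "0 < min t0 (pi/2 - t0)" using t0i by auto
    show "\<forall>y. \<bar>t0 - y\<bar> < min t0 (pi/2 - t0) \<longrightarrow> h t0 \<le> h y"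
      using hmin by (auto simp: abs_less_iff)
  qed
  have h2pos: "h2 \<ge> 0"
    by (rule second_deriv_min[OF t0i hmin _ hd2 h'0]) (use hd in auto)
  have Lneg: "(\<beta> * ell2 r t0 + \<beta>^2 * (ell1 r t0)^2) * \<phi> t0 + SL_drift n p t0 * (\<beta> * ell1 r t0 * \<phi> t0)
         - SL_potential n p r t0 * \<phi> t0 + lam * \<phi> t0 < 0"
    unfolding \<phi>_def by (rule key_ineq[OF t0i r np b]) (use bK in \<open>simp add: K_def\<close>)
  have o: "D 2 t0 + SL_drift n p t0 * D 1 t0 - SL_potential n p r t0 * D 0 t0 + lam * D 0 t0 = 0"
    using ode t0i by auto
  have D1: "D 1 t0 = M * (\<beta> * ell1 r t0 * \<phi> t0)" using h'0 unfolding h'_def by simp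
  have "M * ((\<beta> * ell2 r t0 + \<beta>^2 * (ell1 r t0)^2) * \<phi> t0 + SL_drift n p t0 * (\<beta> * ell1 r t0 * \<phi> t0)
         - SL_potential n p r t0 * \<phi> t0 + lam * \<phi> t0) < 0"
    using Lneg M0 by (simp add: mult_pos_neg)
  then have "M * ((\<beta> * ell2 r t0 + \<beta>^2 * (ell1 r t0)^2) * \<phi> t0) + SL_drift n p t0 * D 1 t0
         - SL_potential n p r t0 * D 0 t0 + lam * D 0 t0 < 0"
    unfolding D1 eq0 by (simp add: algebra_simps)
  then have "M * ((\<beta> * ell2 r t0 + \<beta>^2 * (ell1 r t0)^2) * \<phi> t0) < D 2 t0" using o by linarith
  then show False using h2pos unfolding h2_def by linarith
qed



theorem theorem6p2:
  fixes n p :: nat and \<rho> :: real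
  assumes "1 \<le> n" and "p < n" and "\<rho> < 0"
  shows "equivariantly_weakly_stable n p \<rho>"
  unfolding equivariantly_weakly_stable_def
proof (rule ballI, rule ccontr)
  fix lam assume "lam \<in> equivariant_spectrum n p \<rho>" and nl: "\<not> lam \<ge> 0"
  then obtain \<xi> D where sm: "smooth_on_closed 0 (pi / 2) \<xi> D"
    and x0: "\<xi> 0 = 0" and xe: "\<xi> (pi / 2) = 0" and ex: "\<exists>t\<in>{0..pi/2}. \<xi> t \<noteq> 0"
    and ode: "\<forall>t\<in>{0<..<pi/2}. D 2 t + SL_drift n p t * D 1 t - SL_potential n p \<rho> t * \<xi> t + lam * \<xi> t = 0"
    unfolding equivariant_spectrum_def by blast
  have lam: "lam < 0" using nl by simp
  have r: "\<rho> \<noteq> 0" using assms by simp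
  have Deq: "\<forall>t\<in>{0..pi/2}. D 0 t = \<xi> t" and der: "\<forall>k. \<forall>t\<in>{0..pi/2}. (D k has_real_derivative D (Suc k) t) (at t within {0..pi/2})"
    using sm unfolding smooth_on_closed_def by auto
  have D00: "D 0 0 = 0" using Deq x0 by auto
  have D0e: "D 0 (pi/2) = 0" using Deq xe by auto
  obtain t1 where t1: "t1 \<in> {0..pi/2}" "\<xi> t1 \<noteq> 0" using ex by blast
  have "t1 \<noteq> 0" using t1 x0 by auto
  moreover have "t1 \<noteq> pi/2"
  proof
    assume "t1 = pi/2" then have "\<xi> t1 = 0" using xe by (simp only:)
    then show False using t1(2) by contradiction
  qed
  ultimately have t1i: "0 < t1" "t1 < pi/2" using t1 by auto
  have ode': "\<forall>t\<in>{0<..<pi/2}. D 2 t + SL_drift n p t * D 1 t - SL_potential n p \<rho> t * D 0 t + lam * D 0 t = 0"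
    using ode Deq by auto
  have D1: "D 0 t1 \<noteq> 0" using Deq t1 by auto
  show False
  proof (cases "D 0 t1 > 0")
    case True
    show False by (rule core[OF lam r assms(2) der D00 D0e t1i True ode'])
  next
    case False
    then have pos: "(\<lambda>k t. - D k t) 0 t1 > 0" using D1 by simp
    have der': "\<forall>k. \<forall>t\<in>{0..pi/2}. ((\<lambda>k t. - D k t) k has_real_derivative (\<lambda>k t. - D k t) (Suc k) t) (at t within {0..pi/2})"
      using der by (auto intro: DERIV_minus)
    have ode'': "\<forall>t\<in>{0<..<pi/2}. (\<lambda>k t. - D k t) 2 t + SL_drift n p t * (\<lambda>k t. - D k t) 1 t
        - SL_potential n p \<rho> t * (\<lambda>k t. - D k t) 0 t + lam * (\<lambda>k t. - D k t) 0 t = 0"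
    proof
      fix t assume "t \<in> {0<..<pi/2}"
      then have "D 2 t + SL_drift n p t * D 1 t - SL_potential n p \<rho> t * D 0 t + lam * D 0 t = 0" using ode' by blast
      then show "(\<lambda>k t. - D k t) 2 t + SL_drift n p t * (\<lambda>k t. - D k t) 1 t
        - SL_potential n p \<rho> t * (\<lambda>k t. - D k t) 0 t + lam * (\<lambda>k t. - D k t) 0 t = 0"
        by (simp add: algebra_simps)
    qed
    show False by (rule core[OF lam r assms(2) der' _ _ t1i pos ode'']) (use D00 D0e in auto)
  qed
qed

end
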